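(* Let $k,m,n,r$ be integers with $n\ge 3$, $2\le m\le n$, $0\le r\le n-1$ and $1\le k\le\left\lfloor\frac{m}{2}\right\rfloor$. Then the sum of the elements of the multiset $\sigma_k(J^r_{n,m})$ equals $nk$ if $k<\frac{m}{2}$ or $n$ is even, and equals $(n-1)k$ if $k=\frac{m}{2}$ and $n$ is odd.
   Context: The cycle $C_n$ ($n\ge 3$) has vertex set $\{0,1,\dots,n-1\}$ with $i$ adjacent to $i+1 \bmod n$. For vertices $u,v$, $d(u,v)$ is the geodesic (shortest path) distance. For a set $A=\{a_0<a_1<\dots<a_{m-1}\}$ of vertices and $a_i,a_j\in A$, $\mathrm{span}_A(a_i,a_j)$ is the least positive integer congruent to $j-i$ modulo $m$. For $1\le k\le m-1$, $\sigma_k(A)$ is the multiset $[\,d(u,v): u,v\in A,\ u\ne v,\ \mathrm{span}_A(u,v)=k\,]$ taken over ordered pairs $(u,v)$. For integers $1\le m\le n$ and $0\le r\le n-1$, $J^r_{n,m}=\left\{\left\lfloor\frac{ni+r}{m}\right\rfloor : 0\le i<m\right\}$. *)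

theory Defs
  imports Main "HOL-Library.Multiset"
begin

text \<open>Geodesic distance in the cycle C_n on vertices 0..n-1.\<close>
definition cdist :: "nat \<Rightarrow> nat \<Rightarrow> nat \<Rightarrow> nat" where
  "cdist n u v = (let d = (if u \<le> v then v - u else u - v) in min d (n - d))"

text \<open>Position of x in the increasing enumeration a_0 < a_1 < ... of A.\<close>
definition idx :: "nat set \<Rightarrow> nat \<Rightarrow> nat" where
  "idx A x = card {y \<in> A. y < x}"

text \<open>span_A(a_i,a_j): least positive integer congruent to j - i modulo |A|.\<close>
definition span :: "nat set \<Rightarrow> nat \<Rightarrow> nat \<Rightarrow> nat" where
  "span A u v = (let s = nat ((int (idx A v) - int (idx A u)) mod int (card A))
                 in if s = 0 then card A else s)"

text \<open>sigma_k(A) in C_n, as a multiset over ordered pairs.\<close>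
definition sigma :: "nat \<Rightarrow> nat set \<Rightarrow> nat \<Rightarrow> nat multiset" where
  "sigma n A k = image_mset (\<lambda>(u, v). cdist n u v)
     (mset_set {(u, v). u \<in> A \<and> v \<in> A \<and> u \<noteq> v \<and> span A u v = k})"

definition J :: "nat \<Rightarrow> nat \<Rightarrow> nat \<Rightarrow> nat set" where
  "J n m r = (\<lambda>i. (n * i + r) div m) ` {..<m}"

end

theory Submission
  imports Defs
begin

definition aa :: "nat \<Rightarrow> nat \<Rightarrow> nat \<Rightarrow> nat \<Rightarrow> nat" where
  "aa n m r i = (n * i + r) div m"

lemma aa_step:
  assumes "0 < m" "m \<le> n"
  shows "aa n m r i < aa n m r (Suc i)"
proof -
  have "(n*i + r) div m < (n*i + r + m) div m"
    using assms by (simp add: div_add_self2)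
  also have "\<dots> \<le> (n*i + r + n) div m" using assms by (intro div_le_mono) simp
  finally show ?thesis by (simp add: aa_def algebra_simps)
qed

lemma aa_smono:
  assumes "0 < m" "m \<le> n"
  shows "strict_mono (aa n m r)"
  using aa_step[OF assms] by (simp add: strict_mono_Suc_iff)

lemma aa_add_m:
  assumes "0 < m"
  shows "aa n m r (i + m) = aa n m r i + n"
proof -
  have e: "n * (i + m) + r = (n*i + r) + m * n" by (simp add: algebra_simps)
  have "((n*i + r) + m * n) div m = n + (n*i + r) div m"
    using assms by (intro div_mult_self2) simp
  then show ?thesis unfolding aa_def e by simp
qed

lemma aa_lt_n:
  assumes "0 < m" "r < n" "i < m"
  shows "aa n m r i < n"
proof -
  have "n * i + r < n * m"
  proof -
    have "n * Suc i \<le> n * m" using assms by (intro mult_le_mono2) simp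
    then have "n * i + n \<le> n * m" by simp
    then show ?thesis using assms by linarith
  qed
  then show ?thesis using assms by (simp add: aa_def div_less_iff_less_mult mult.commute)
qed

lemma div_add_upper:
  fixes x y m :: nat
  assumes "0 < m"
  shows "(x + y) div m \<le> x div m + (y + m - 1) div m"
proof -
  have e1: "(x + y) div m = x div m + y div m + (x mod m + y mod m) div m"
    by (rule div_add1_eq)
  have e2: "y div m + (x mod m + y mod m) div m = (x mod m + y) div m"
    using div_add1_eq[of "x mod m" y m] by simp
  have e3: "(x mod m + y) div m \<le> (y + m - 1) div m"
  proof (rule div_le_mono)
    have "x mod m < m" using assms by simp
    then show "x mod m + y \<le> y + m - 1" by linarith
  qed
  show ?thesis using e1 e2 e3 by linarith
qed

lemma div_add_lower:
  fixes x y m :: nat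
  shows "x div m + y div m \<le> (x + y) div m"
  using div_add1_eq[of x y m] by linarith

lemma J_eq: "J n m r = aa n m r ` {..<m}"
  by (simp add: J_def aa_def[abs_def])

lemma card_J:
  assumes "0 < m" "m \<le> n"
  shows "card (J n m r) = m"
  using aa_smono[OF assms] by (simp add: J_eq card_image strict_mono_imp_inj_on)

lemma idx_aa:
  assumes "0 < m" "m \<le> n" "i < m"
  shows "idx (J n m r) (aa n m r i) = i"
proof -
  have sm: "strict_mono (aa n m r)" using aa_smono[OF assms(1,2)] .
  have "{y \<in> J n m r. y < aa n m r i} = aa n m r ` {..<i}"
    using assms sm by (auto simp: J_eq strict_mono_less)
  then show ?thesis using sm
    by (simp add: idx_def card_image strict_mono_imp_inj_on inj_on_subset)
qed

lemma mod_span_iff: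
  fixes i j k m :: nat
  assumes "i < m" "j < m" "0 < k" "k < m"
  shows "nat ((int j - int i) mod int m) = k \<longleftrightarrow> j = (i + k) mod m"
proof
  assume h: "nat ((int j - int i) mod int m) = k"
  then have "(int j - int i) mod int m = int k" using assms by simp
  then have "(int j - int i + int i) mod int m = (int k + int i) mod int m"
    by (metis mod_add_left_eq)
  then have "int j mod int m = int ((i + k) mod m)" by (simp add: of_nat_mod add.commute)
  then show "j = (i + k) mod m" using assms by (simp add: of_nat_mod[symmetric])
next
  assume h: "j = (i + k) mod m"
  have "(int j - int i) mod int m = ((int i + int k) mod int m - int i) mod int m"
    by (simp add: h of_nat_mod)
  also have "\<dots> = (int i + int k - int i) mod int m" by (rule mod_diff_left_eq)
  also have "\<dots> = int k" using assms by simp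
  finally show "nat ((int j - int i) mod int m) = k" by simp
qed

lemma span_aa:
  assumes "0 < m" "m \<le> n" "i < m" "j < m" "0 < k" "k < m"
  shows "span (J n m r) (aa n m r i) (aa n m r j) = k \<longleftrightarrow> j = (i + k) mod m"
  using assms mod_span_iff[of i m j k]
  by (auto simp: span_def Let_def idx_aa card_J)

lemma pairs_eq:
  assumes "0 < m" "m \<le> n" "0 < k" "k < m"
  shows "{(u, v). u \<in> J n m r \<and> v \<in> J n m r \<and> u \<noteq> v \<and> span (J n m r) u v = k}
         = (\<lambda>i. (aa n m r i, aa n m r ((i + k) mod m))) ` {..<m}"
proof -
  have sm: "strict_mono (aa n m r)" using aa_smono[OF assms(1,2)] .
  have ne: "(i + k) mod m \<noteq> i" if "i < m" for i
  proof
    assume "(i + k) mod m = i"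
    then show False using that assms
      by (cases "i + k < m") (auto simp: mod_if split: if_splits)
  qed
  show ?thesis
  proof (intro equalityI subsetI)
    fix p assume "p \<in> {(u, v). u \<in> J n m r \<and> v \<in> J n m r \<and> u \<noteq> v \<and> span (J n m r) u v = k}"
    then obtain i j where p: "p = (aa n m r i, aa n m r j)" "i < m" "j < m"
      "span (J n m r) (aa n m r i) (aa n m r j) = k"
      by (auto simp: J_eq)
    then have "j = (i + k) mod m" using span_aa[OF assms(1,2) p(2,3) assms(3,4)] by simp
    then show "p \<in> (\<lambda>i. (aa n m r i, aa n m r ((i + k) mod m))) ` {..<m}" using p by auto
  next
    fix p assume "p \<in> (\<lambda>i. (aa n m r i, aa n m r ((i + k) mod m))) ` {..<m}"
    then obtain i where p: "p = (aa n m r i, aa n m r ((i + k) mod m))" "i < m" by auto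
    have jm: "(i + k) mod m < m" using assms by simp
    have "aa n m r i \<noteq> aa n m r ((i + k) mod m)"
      using ne[OF p(2)] sm by (metis strict_mono_eq)
    moreover have "span (J n m r) (aa n m r i) (aa n m r ((i + k) mod m)) = k"
      using span_aa[OF assms(1,2) p(2) jm assms(3,4)] by simp
    ultimately show "p \<in> {(u, v). u \<in> J n m r \<and> v \<in> J n m r \<and> u \<noteq> v \<and> span (J n m r) u v = k}"
      using p jm by (auto simp: J_eq)
  qed
qed

lemma sigma_sum:
  assumes "0 < m" "m \<le> n" "0 < k" "k < m"
  shows "sum_mset (sigma n (J n m r) k) =
         (\<Sum>i<m. cdist n (aa n m r i) (aa n m r ((i + k) mod m)))"
proof -
  have sm: "strict_mono (aa n m r)" using aa_smono[OF assms(1,2)] .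
  have inj: "inj_on (\<lambda>i. (aa n m r i, aa n m r ((i + k) mod m))) {..<m}"
    using sm by (auto simp: inj_on_def strict_mono_eq)
  have "sum_mset (sigma n (J n m r) k) =
        sum (\<lambda>(u, v). cdist n u v) ((\<lambda>i. (aa n m r i, aa n m r ((i + k) mod m))) ` {..<m})"
    unfolding sigma_def pairs_eq[OF assms] by (simp add: sum_unfold_sum_mset)
  also have "\<dots> = (\<Sum>i<m. cdist n (aa n m r i) (aa n m r ((i + k) mod m)))"
    by (subst sum.reindex[OF inj]) simp
  finally show ?thesis .
qed

lemma cdist_aa:
  assumes "0 < m" "m \<le> n" "i < m" "k \<le> m"
  shows "cdist n (aa n m r i) (aa n m r ((i + k) mod m)) =
         min (aa n m r (i + k) - aa n m r i) (n - (aa n m r (i + k) - aa n m r i))"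
proof -
  have sm: "strict_mono (aa n m r)" using aa_smono[OF assms(1,2)] .
  then have mono: "mono (aa n m r)" by (rule strict_mono_mono)
  have le1: "aa n m r i \<le> aa n m r (i + k)" using mono by (simp add: monoD)
  have le2: "aa n m r (i + k) \<le> aa n m r i + n"
    using monoD[OF mono, of "i + k" "i + m"] assms aa_add_m[OF assms(1)] by simp
  show ?thesis
  proof (cases "i + k < m")
    case True
    then show ?thesis using le1 by (simp add: cdist_def Let_def)
  next
    case False
    then have md: "(i + k) mod m = i + k - m" using assms by (simp add: mod_if)
    have "aa n m r (i + k) = aa n m r (i + k - m) + n"
      using aa_add_m[OF assms(1), where i="i + k - m" and n=n and r=r] False by simp
    then show ?thesis using le1 le2 md unfolding cdist_def Let_def by (simp add: min.commute add.commute)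
  qed
qed

lemma telescope:
  assumes "0 < m"
  shows "(\<Sum>i<m. aa n m r (i + k)) = (\<Sum>i<m. aa n m r i) + n * k"
proof (induction k)
  case 0
  then show ?case by simp
next
  case (Suc k)
  define f where "f i = aa n m r (i + k)" for i
  have e1: "sum f {..<Suc m} = f 0 + (\<Sum>i<m. f (Suc i))" by (rule sum.lessThan_Suc_shift)
  have e2: "sum f {..<Suc m} = sum f {..<m} + f m" by simp
  have e3: "f m = f 0 + n" using aa_add_m[OF assms, where i=k and n=n and r=r]
    by (simp add: f_def add.commute)
  have "(\<Sum>i<m. aa n m r (i + Suc k)) = (\<Sum>i<m. f (Suc i))" by (simp add: f_def)
  also have "\<dots> = sum f {..<m} + n" using e1 e2 e3 by simp
  also have "sum f {..<m} = (\<Sum>i<m. aa n m r i) + n * k" using Suc by (simp add: f_def)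
  finally show ?case by simp
qed

lemma D_upper:
  assumes "0 < m"
  shows "aa n m r (i + k) \<le> aa n m r i + (n * k + m - 1) div m"
  using div_add_upper[OF assms, of "n * i + r" "n * k"] by (simp add: aa_def algebra_simps)

lemma D_lower:
  shows "aa n m r i + (n * k) div m \<le> aa n m r (i + k)"
  using div_add_lower[of "n * i + r" m "n * k"] by (simp add: aa_def algebra_simps)

theorem mainTheorem2:
  fixes k m n r :: nat
  assumes "n \<ge> 3" and "2 \<le> m" and "m \<le> n" and "r \<le> n - 1"
    and "1 \<le> k" and "k \<le> m div 2"
  shows "sum_mset (sigma n (J n m r) k) =
           (if 2 * k < m \<or> even n then n * k else (n - 1) * k)"
proof -
  have m0: "0 < m" and k0: "0 < k" and km: "k < m" and km2: "2 * k \<le> m"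
    using assms by auto
  have mono: "mono (aa n m r)" using aa_smono[OF m0 assms(3)] by (rule strict_mono_mono)
  have le1: "aa n m r i \<le> aa n m r (i + k)" for i using mono by (simp add: monoD)
  define D where "D i = aa n m r (i + k) - aa n m r i" for i
  have S: "sum_mset (sigma n (J n m r) k) = (\<Sum>i<m. min (D i) (n - D i))"
    using sigma_sum[OF m0 assms(3) k0 km] cdist_aa[OF m0 assms(3) _ less_imp_le[OF km]]
    by (simp add: D_def)
  define c where "c = (n * k + m - 1) div m"
  have Dc: "D i \<le> c" for i using D_upper[OF m0, of n r i k] by (simp add: D_def c_def)
  have cm: "c * m \<le> n * k + m - 1" unfolding c_def by (metis div_mult_mod_eq le_add1)
  show ?thesis
  proof (cases "2 * k < m")
    case True
    have "n * 1 \<le> n * (m - 2 * k)" using True by (intro mult_le_mono2) simp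
    then have "n \<le> n * (m - 2 * k)" by simp
    then have "m \<le> n * m - n * (2 * k)" using assms(3) by (simp add: diff_mult_distrib2)
    moreover have "n * (2 * k) \<le> n * m" using km2 by simp
    ultimately have h0: "n * (2 * k) + m \<le> n * m" by linarith
    then have h: "2 * (n * k) + m \<le> n * m" by (simp add: mult.left_commute)
    have "(2 * c) * m < (n + 1) * m" using cm h m0 by (simp add: algebra_simps)
    then have "2 * c \<le> n" using m0 by (metis Suc_eq_plus1 less_Suc_eq_le mult_less_cancel2)
    then have "min (D i) (n - D i) = D i" for i using Dc[of i] by simp
    then have "sum_mset (sigma n (J n m r) k) = (\<Sum>i<m. D i)" using S by simp
    also have "\<dots> = (\<Sum>i<m. aa n m r (i + k)) - (\<Sum>i<m. aa n m r i)"
      unfolding D_def by (rule sum_subtractf_nat) (simp add: le1)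
    also have "\<dots> = n * k" using telescope[OF m0, of n r k] by simp
    finally show ?thesis using True by simp
  next
    case False
    then have mk: "m = 2 * k" using km2 by simp
    have "(2 * c) * k < (n + 2) * k" using cm mk k0 by (simp add: algebra_simps)
    then have "2 * c < n + 2" using k0 by (simp only: mult_less_cancel2)
    then have c2: "2 * c \<le> n + 1" by simp
    have "(n * k) div m = n div 2" using mk k0 by (simp add: mult.commute)
    then have Dl: "n div 2 \<le> D i" for i using D_lower[of n m r i k] by (simp add: D_def)
    have "min (D i) (n - D i) = n div 2" for i using Dl[of i] Dc[of i] c2 by linarith
    then have "sum_mset (sigma n (J n m r) k) = m * (n div 2)" using S by simp
    also have "\<dots> = (if even n then n * k else (n - 1) * k)"
      using mk by (auto elim!: evenE oddE simp: algebra_simps)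
    finally show ?thesis using False by simp
  qed
qed

end
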